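(* Let $G$ be an $n$-vertex graph, $f\ge 1$ and $p\ge 1$ integers, and run Algorithm 1 (described in the context) on $G$ with parameters $f,p$. Then the final source set satisfies $|S|\le \lfloor (f+1)n/p\rfloor$, and if $\gamma(n,\ell)$ is an upper bound on the number of edges of the sourcewise spanner $A_S$ whenever $|S|\le \ell$, the returned spanner $H$ has $O\bigl(np+nf+\gamma(n,\lfloor (f+1)n/p\rfloor)\bigr)$ edges.
   Context: Algorithm 1 (input: graph $G$, integers $f,p\ge1$, and a value $\beta$). Initially every vertex is colored white and has $\mathrm{counter}(v)=f+1$; $S=\emptyset$, $E'=\emptyset$. For a vertex $u$, let $N_w(u)$ be the set of currently white neighbors of $u$ and $\delta_w(u)=|N_w(u)|$. While there exists $s\in V\setminus S$ with $\delta_w(s)\ge p$: add $s$ to $S$, color $s$ red, and for each $u\in N_w(s)$ decrement $\mathrm{counter}(u)$, add edge $(s,u)$ to $E'$, and if $\mathrm{counter}(u)=0$ color $u$ black. After the loop, add to $E'$ every edge $(u,v)\in E(G)$ such that $u$ is white. Let $A_S$ be a $\beta$-additive $f$-EFT (resp. $f$-VFT) sourcewise spanner of $G$ with respect to $S$, i.e. a subgraph such that for every set $F$ of at most $f$ edges (resp. vertices) and every $s\in S$, $v\in V(G)$, $d_{A_S-F}(s,v)\le d_{G-F}(s,v)+\beta$. Return $H=(V(G),E'\cup E(A_S))$. *)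

theory Defs
  imports Main "HOL-Library.Extended_Nat"
begin

definition simple_graph :: "'a set \<Rightarrow> 'a set set \<Rightarrow> bool" where
  "simple_graph V E \<longleftrightarrow> finite V \<and> (\<forall>e\<in>E. \<exists>u v. e = {u, v} \<and> u \<noteq> v \<and> u \<in> V \<and> v \<in> V)"

definition walk :: "'a set set \<Rightarrow> 'a list \<Rightarrow> bool" where
  "walk E xs \<longleftrightarrow> xs \<noteq> [] \<and> (\<forall>i. Suc i < length xs \<longrightarrow> {xs ! i, xs ! Suc i} \<in> E)"

text \<open>Shortest-path distance in the graph with edge set E (infinity if unreachable).\<close>
definition gdist :: "'a set set \<Rightarrow> 'a \<Rightarrow> 'a \<Rightarrow> enat" where
  "gdist E u v = (INF xs \<in> {xs. walk E xs \<and> hd xs = u \<and> last xs = v}. enat (length xs - 1))"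

definition del_vertices :: "'a set set \<Rightarrow> 'a set \<Rightarrow> 'a set set" where
  "del_vertices E F = {e \<in> E. e \<inter> F = {}}"

definition eft_sourcewise_spanner ::
  "'a set \<Rightarrow> 'a set set \<Rightarrow> nat \<Rightarrow> nat \<Rightarrow> 'a set \<Rightarrow> 'a set set \<Rightarrow> bool" where
  "eft_sourcewise_spanner V E f \<beta> S A \<longleftrightarrow> A \<subseteq> E \<and>
     (\<forall>F. F \<subseteq> E \<and> card F \<le> f \<longrightarrow>
        (\<forall>s\<in>S. \<forall>v\<in>V. gdist (A - F) s v \<le> gdist (E - F) s v + enat \<beta>))"

definition vft_sourcewise_spanner ::
  "'a set \<Rightarrow> 'a set set \<Rightarrow> nat \<Rightarrow> nat \<Rightarrow> 'a set \<Rightarrow> 'a set set \<Rightarrow> bool" where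
  "vft_sourcewise_spanner V E f \<beta> S A \<longleftrightarrow> A \<subseteq> E \<and>
     (\<forall>F. F \<subseteq> V \<and> card F \<le> f \<longrightarrow>
        (\<forall>s\<in>S - F. \<forall>v\<in>V - F.
           gdist (del_vertices A F) s v \<le> gdist (del_vertices E F) s v + enat \<beta>))"

datatype color = White | Red | Black

definition Nw :: "'a set set \<Rightarrow> ('a \<Rightarrow> color) \<Rightarrow> 'a \<Rightarrow> 'a set" where
  "Nw E col u = {v. {u, v} \<in> E \<and> col v = White}"

text \<open>Algorithm state: (colour, counter, S, E').\<close>
type_synonym 'a alg_state = "('a \<Rightarrow> color) \<times> ('a \<Rightarrow> nat) \<times> 'a set \<times> 'a set set"

definition alg_init :: "nat \<Rightarrow> 'a alg_state" where
  "alg_init f = ((\<lambda>_. White), (\<lambda>_. f + 1), {}, {})"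

definition alg_step :: "'a set \<Rightarrow> 'a set set \<Rightarrow> nat \<Rightarrow> 'a alg_state \<Rightarrow> 'a alg_state \<Rightarrow> bool" where
  "alg_step V E p st st' \<longleftrightarrow>
     (case st of (col, cnt, S, Ep) \<Rightarrow>
       (\<exists>s \<in> V - S. card (Nw E col s) \<ge> p \<and>
          st' = ((\<lambda>u. if u = s then Red
                      else if u \<in> Nw E col s \<and> cnt u - 1 = 0 then Black
                      else col u),
                 (\<lambda>u. if u \<in> Nw E col s then cnt u - 1 else cnt u),
                 insert s S,
                 Ep \<union> {{s, u} | u. u \<in> Nw E col s})))"

text \<open>alg1_run V E f p S E': some execution of the loop of Algorithm 1 terminates with
  source set S, and E' is the edge set after the final step (before adding A_S).\<close>
definition alg1_run :: "'a set \<Rightarrow> 'a set set \<Rightarrow> nat \<Rightarrow> nat \<Rightarrow> 'a set \<Rightarrow> 'a set set \<Rightarrow> bool" where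
  "alg1_run V E f p S E' \<longleftrightarrow>
     (\<exists>col cnt Ep. (alg_step V E p)\<^sup>*\<^sup>* (alg_init f) (col, cnt, S, Ep) \<and>
        \<not> (\<exists>s \<in> V - S. card (Nw E col s) \<ge> p) \<and>
        E' = Ep \<union> {e \<in> E. \<exists>u \<in> e. col u = White})"

end

theory Submission
  imports Defs
begin

definition inv1 :: "'a set \<Rightarrow> 'a set set \<Rightarrow> nat \<Rightarrow> nat \<Rightarrow> 'a alg_state \<Rightarrow> bool" where
  "inv1 V E f p st = (case st of (col, cnt, S, Ep) \<Rightarrow>
     S \<subseteq> V \<and> finite Ep \<and> (\<forall>u. col u = Red \<longleftrightarrow> u \<in> S) \<and> (\<forall>u. cnt u \<le> f + 1) \<and>
     (\<forall>u. col u = White \<longrightarrow> cnt u \<ge> 1 \<and> card {s\<in>S. {u,s} \<in> E} + cnt u = f + 1) \<and>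
     card Ep \<le> (\<Sum>u\<in>V. f + 1 - cnt u) \<and> p * card S \<le> (\<Sum>u\<in>V. f + 1 - cnt u))"

lemma sg_edge:
  assumes "simple_graph V E" "{a, b} \<in> E"
  shows "a \<in> V \<and> b \<in> V \<and> a \<noteq> b"
proof -
  obtain u v where "{a,b} = {u,v}" "u \<noteq> v" "u \<in> V" "v \<in> V"
    using assms unfolding simple_graph_def by blast
  then show ?thesis by (metis doubleton_eq_iff)
qed

lemma Nw_sub: "simple_graph V E \<Longrightarrow> Nw E col s \<subseteq> V"
  unfolding Nw_def using sg_edge by fastforce

lemma Nw_nots: "simple_graph V E \<Longrightarrow> s \<notin> Nw E col s"
  unfolding Nw_def using sg_edge by fastforce

lemma inv_init: "inv1 V E f p (alg_init f)"
  unfolding inv1_def alg_init_def by auto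

lemma inv_step:
  assumes sg: "simple_graph V E" and st: "alg_step V E p st st'" and I: "inv1 V E f p st"
  shows "inv1 V E f p st'"
proof -
  obtain col cnt S Ep where stdef: "st = (col, cnt, S, Ep)" by (cases st) auto
  from st obtain s where s: "s \<in> V - S" "card (Nw E col s) \<ge> p"
    and st': "st' = ((\<lambda>u. if u = s then Red
                      else if u \<in> Nw E col s \<and> cnt u - 1 = 0 then Black
                      else col u),
                 (\<lambda>u. if u \<in> Nw E col s then cnt u - 1 else cnt u),
                 insert s S,
                 Ep \<union> {{s, u} | u. u \<in> Nw E col s})"
    unfolding alg_step_def stdef by auto
  define N where "N = Nw E col s"
  define col' where "col' = (\<lambda>u. if u = s then Red
                      else if u \<in> N \<and> cnt u - 1 = 0 then Black
                      else col u)"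
  define cnt' where "cnt' = (\<lambda>u. if u \<in> N then cnt u - 1 else cnt u)"
  have st'': "st' = (col', cnt', insert s S, Ep \<union> {{s, u} | u. u \<in> N})"
    using st' unfolding col'_def cnt'_def N_def by simp
  have fV: "finite V" using sg unfolding simple_graph_def by auto
  have NV: "N \<subseteq> V" using Nw_sub[OF sg] N_def by auto
  have fN: "finite N" using NV fV finite_subset by auto
  have sN: "s \<notin> N" using Nw_nots[OF sg] N_def by auto
  have Nw: "\<And>u. u \<in> N \<longleftrightarrow> {s,u} \<in> E \<and> col u = White" unfolding N_def Nw_def by auto
  from I have SV: "S \<subseteq> V" and fE: "finite Ep" and red: "\<forall>u. col u = Red \<longleftrightarrow> u \<in> S"
    and cb: "\<forall>u. cnt u \<le> f + 1"
    and wh: "\<forall>u. col u = White \<longrightarrow> cnt u \<ge> 1 \<and> card {s\<in>S. {u,s} \<in> E} + cnt u = f + 1"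
    and c1: "card Ep \<le> (\<Sum>u\<in>V. f + 1 - cnt u)" and c2: "p * card S \<le> (\<Sum>u\<in>V. f + 1 - cnt u)"
    unfolding inv1_def stdef by auto
  have fS: "finite S" using SV fV finite_subset by auto
  have D: "(\<Sum>u\<in>V. f + 1 - cnt' u) = (\<Sum>u\<in>V. f + 1 - cnt u) + card N"
  proof -
    have "(\<Sum>u\<in>V. f + 1 - cnt' u) = (\<Sum>u\<in>V. (f + 1 - cnt u) + (if u \<in> N then 1 else 0))"
    proof (rule sum.cong)
      fix u assume "u \<in> V"
      show "f + 1 - cnt' u = (f + 1 - cnt u) + (if u \<in> N then 1 else 0)"
      proof (cases "u \<in> N")
        case True
        then have "cnt u \<ge> 1" using wh Nw by auto
        then show ?thesis using True cb[rule_format, of u] unfolding cnt'_def by auto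
      qed (simp add: cnt'_def)
    qed simp
    also have "\<dots> = (\<Sum>u\<in>V. f + 1 - cnt u) + (\<Sum>u\<in>V. if u \<in> N then 1 else 0)"
      by (rule sum.distrib)
    also have "(\<Sum>u\<in>V. if u \<in> N then (1::nat) else 0) = card (V \<inter> N)"
      using fV by (simp add: sum.If_cases)
    also have "V \<inter> N = N" using NV by auto
    finally show ?thesis .
  qed
  have cardE: "card (Ep \<union> {{s, u} | u. u \<in> N}) \<le> card Ep + card N"
  proof -
    have "{{s, u} | u. u \<in> N} = (\<lambda>u. {s,u}) ` N" by auto
    then have "card {{s, u} | u. u \<in> N} \<le> card N" using card_image_le[OF fN] by simp
    then show ?thesis using card_Un_le[of Ep "{{s, u} | u. u \<in> N}"] by linarith
  qed
  have cardS: "card (insert s S) = card S + 1" using s fS by simp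
  have whnew: "\<forall>u. col' u = White \<longrightarrow> cnt' u \<ge> 1 \<and> card {t\<in>insert s S. {u,t} \<in> E} + cnt' u = f + 1"
  proof (intro allI impI)
    fix u assume cw: "col' u = White"
    have us: "u \<noteq> s" using cw unfolding col'_def by auto
    show "cnt' u \<ge> 1 \<and> card {t\<in>insert s S. {u,t} \<in> E} + cnt' u = f + 1"
    proof (cases "u \<in> N")
      case True
      then have cu: "col u = White" "{s,u} \<in> E" using Nw by auto
      have nz: "cnt u - 1 \<noteq> 0" using cw us True unfolding col'_def by auto
      have eq: "{t\<in>insert s S. {u,t} \<in> E} = insert s {t\<in>S. {u,t} \<in> E}"
        using cu(2) by (auto simp: insert_commute)
      have "s \<notin> {t\<in>S. {u,t} \<in> E}" using s by auto
      then have "card {t\<in>insert s S. {u,t} \<in> E} = card {t\<in>S. {u,t} \<in> E} + 1"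
        using eq fS by simp
      then show ?thesis using wh cu nz True unfolding cnt'_def by auto
    next
      case False
      then have cu: "col u = White" using cw us unfolding col'_def by auto
      then have "{s,u} \<notin> E" using False Nw by auto
      then have eq: "{t\<in>insert s S. {u,t} \<in> E} = {t\<in>S. {u,t} \<in> E}"
        by (auto simp: insert_commute)
      then show ?thesis using wh cu False unfolding cnt'_def by auto
    qed
  qed
  have rednew: "\<forall>u. col' u = Red \<longleftrightarrow> u \<in> insert s S"
  proof
    fix u show "col' u = Red \<longleftrightarrow> u \<in> insert s S"
      using red Nw unfolding col'_def by (metis color.distinct(1) color.distinct(5) insert_iff)
  qed
  have pN: "p \<le> card N" using s N_def by simp
  have cb': "\<forall>u. cnt' u \<le> f + 1"
  proof
    fix u show "cnt' u \<le> f + 1" using cb[rule_format, of u] unfolding cnt'_def by auto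
  qed
  have "card (Ep \<union> {{s, u} | u. u \<in> N}) \<le> (\<Sum>u\<in>V. f + 1 - cnt' u)"
    using D c1 cardE by linarith
  moreover have "p * card (insert s S) \<le> (\<Sum>u\<in>V. f + 1 - cnt' u)"
    using D c2 cardS pN by (simp add: algebra_simps)
  moreover have "insert s S \<subseteq> V" using SV s by auto
  moreover have "finite (Ep \<union> {{s, u} | u. u \<in> N})"
  proof -
    have "{{s, u} | u. u \<in> N} = (\<lambda>u. {s,u}) ` N" by auto
    then show ?thesis using fE fN by simp
  qed
  ultimately show ?thesis unfolding st'' inv1_def prod.case
    using rednew cb' whnew by blast
qed

lemma inv_run:
  assumes "simple_graph V E" "(alg_step V E p)\<^sup>*\<^sup>* (alg_init f) st"
  shows "inv1 V E f p st"
  using assms(2)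
proof (induction rule: rtranclp_induct)
  case base then show ?case by (rule inv_init)
next
  case (step y z) then show ?case using inv_step[OF assms(1)] by blast
qed

lemma main_bound:
  assumes sg: "simple_graph V E" and f1: "f \<ge> 1" and p1: "p \<ge> 1" and run: "alg1_run V E f p S E'"
    and A: "A \<subseteq> E" and gam: "\<forall>l. card S \<le> l \<longrightarrow> card A \<le> \<gamma> (card V) l"
  shows "card S \<le> (f + 1) * card V div p \<and>
         real (card (E' \<union> A)) \<le> 3 * real (card V * p + card V * f
                                        + \<gamma> (card V) ((f + 1) * card V div p))"
proof -
  obtain col cnt Ep where r: "(alg_step V E p)\<^sup>*\<^sup>* (alg_init f) (col, cnt, S, Ep)"
    and trm: "\<not> (\<exists>s \<in> V - S. card (Nw E col s) \<ge> p)"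
    and E'def: "E' = Ep \<union> {e \<in> E. \<exists>u \<in> e. col u = White}"
    using run unfolding alg1_run_def by blast
  have I: "inv1 V E f p (col, cnt, S, Ep)" using inv_run[OF sg r] .
  from I have SV: "S \<subseteq> V" and fE: "finite Ep" and red: "\<forall>u. col u = Red \<longleftrightarrow> u \<in> S"
    and wh: "\<forall>u. col u = White \<longrightarrow> cnt u \<ge> 1 \<and> card {s\<in>S. {u,s} \<in> E} + cnt u = f + 1"
    and c1: "card Ep \<le> (\<Sum>u\<in>V. f + 1 - cnt u)" and c2: "p * card S \<le> (\<Sum>u\<in>V. f + 1 - cnt u)"
    unfolding inv1_def by auto
  have fV: "finite V" using sg unfolding simple_graph_def by auto
  define n where "n = card V"
  have Dle: "(\<Sum>u\<in>V. f + 1 - cnt u) \<le> n * (f + 1)"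
    using sum_bounded_above[of V "\<lambda>u. f + 1 - cnt u" "f+1"] unfolding n_def by auto
  have Sb: "card S \<le> (f + 1) * n div p"
    using c2 Dle p1 less_eq_div_iff_mult_less_eq[of p "card S" "(f+1)*n"]
    by (simp add: algebra_simps)
  define W1 where "W1 = (\<Union>v\<in>V - S. (\<lambda>w. {v,w}) ` Nw E col v)"
  define W2 where "W2 = (\<Union>u\<in>{u\<in>V. col u = White}. (\<lambda>t. {u,t}) ` {t\<in>S. {u,t} \<in> E})"
  have Wsub: "{e \<in> E. \<exists>u \<in> e. col u = White} \<subseteq> W1 \<union> W2"
  proof
    fix e assume "e \<in> {e \<in> E. \<exists>u \<in> e. col u = White}"
    then obtain u where eE: "e \<in> E" and ue: "u \<in> e" and cu: "col u = White" by auto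
    obtain a b where ab: "e = {a,b}" using eE sg unfolding simple_graph_def by blast
    obtain v where ev: "e = {u,v}" using ab ue by auto
    have uv: "u \<in> V" "v \<in> V" using sg_edge[OF sg] eE ev by auto
    show "e \<in> W1 \<union> W2"
    proof (cases "v \<in> S")
      case True
      then show ?thesis unfolding W2_def using uv cu eE ev by auto
    next
      case False
      have "u \<in> Nw E col v" unfolding Nw_def using eE ev cu by (simp add: insert_commute)
      then have "e \<in> (\<lambda>w. {v,w}) ` Nw E col v" using ev by (auto simp: insert_commute)
      then show ?thesis unfolding W1_def using False uv by blast
    qed
  qed
  have W1b: "card W1 \<le> n * p"
  proof -
    have "card W1 \<le> (\<Sum>v\<in>V - S. card ((\<lambda>w. {v,w}) ` Nw E col v))"
      using card_UN_le[of "V - S" "\<lambda>v. (\<lambda>w. {v,w}) ` Nw E col v"] fV unfolding W1_def by simp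
    also have "\<dots> \<le> (\<Sum>v\<in>V - S. p)"
    proof (rule sum_mono)
      fix v assume v: "v \<in> V - S"
      have "card (Nw E col v) < p" using trm v not_le by blast
      moreover have "card ((\<lambda>w. {v,w}) ` Nw E col v) \<le> card (Nw E col v)"
        by (rule card_image_le) (meson Nw_sub sg fV finite_subset)
      ultimately show "card ((\<lambda>w. {v,w}) ` Nw E col v) \<le> p" by linarith
    qed
    also have "\<dots> = card (V - S) * p" by simp
    also have "\<dots> \<le> n * p" unfolding n_def using fV by (simp add: card_mono)
    finally show ?thesis .
  qed
  have fS: "finite S" using SV fV finite_subset by auto
  have W2b: "card W2 \<le> n * f"
  proof -
    have "card W2 \<le> (\<Sum>u\<in>{u\<in>V. col u = White}. card ((\<lambda>t. {u,t}) ` {t\<in>S. {u,t} \<in> E}))"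
      using card_UN_le[of "{u\<in>V. col u = White}" "\<lambda>u. (\<lambda>t. {u,t}) ` {t\<in>S. {u,t} \<in> E}"] fV unfolding W2_def by simp
    also have "\<dots> \<le> (\<Sum>u\<in>{u\<in>V. col u = White}. f)"
    proof (rule sum_mono)
      fix u assume u: "u \<in> {u\<in>V. col u = White}"
      have "col u = White" using u by simp
      then have "card {t\<in>S. {u,t} \<in> E} + cnt u = f + 1" "cnt u \<ge> 1" using wh by blast+
      then have "card {t\<in>S. {u,t} \<in> E} \<le> f" by linarith
      moreover have "card ((\<lambda>t. {u,t}) ` {t\<in>S. {u,t} \<in> E}) \<le> card {t\<in>S. {u,t} \<in> E}"
        by (rule card_image_le) (use fS in auto)
      ultimately show "card ((\<lambda>t. {u,t}) ` {t\<in>S. {u,t} \<in> E}) \<le> f" by linarith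
    qed
    also have "\<dots> = card {u\<in>V. col u = White} * f" by simp
    also have "\<dots> \<le> n * f" unfolding n_def using fV by (simp add: card_mono)
    finally show ?thesis .
  qed
  have fNw: "\<And>v. finite (Nw E col v)"
    using Nw_sub[OF sg] fV finite_subset by blast
  have fW1: "finite W1" unfolding W1_def
  proof (rule finite_UN_I)
    show "finite (V - S)" using fV by simp
    fix v show "finite ((\<lambda>w. {v,w}) ` Nw E col v)" using fNw by simp
  qed
  have fW2: "finite W2" unfolding W2_def
  proof (rule finite_UN_I)
    show "finite {u\<in>V. col u = White}" using fV by simp
    fix u show "finite ((\<lambda>t. {u,t}) ` {t\<in>S. {u,t} \<in> E})" using fS by simp
  qed
  have fW: "finite (W1 \<union> W2)" using fW1 fW2 by simp
  have "card {e \<in> E. \<exists>u \<in> e. col u = White} \<le> card (W1 \<union> W2)"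
    by (rule card_mono[OF fW Wsub])
  also have "\<dots> \<le> card W1 + card W2" by (rule card_Un_le)
  finally have Wb: "card {e \<in> E. \<exists>u \<in> e. col u = White} \<le> n * p + n * f"
    using W1b W2b by linarith
  have Ab: "card A \<le> \<gamma> n ((f + 1) * n div p)" using gam Sb unfolding n_def by simp
  have "card (E' \<union> A) \<le> card E' + card A" by (rule card_Un_le)
  also have "card E' \<le> card Ep + card {e \<in> E. \<exists>u \<in> e. col u = White}"
    unfolding E'def by (rule card_Un_le)
  finally have tot: "card (E' \<union> A) \<le> n * (f + 1) + (n * p + n * f) + \<gamma> n ((f + 1) * n div p)"
    using c1 Dle Wb Ab by linarith
  have "n \<le> n * f" using f1 by simp
  then have "card (E' \<union> A) \<le> 3 * (n * p + n * f + \<gamma> n ((f + 1) * n div p))"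
    using tot by (simp only: distrib_left mult_1_right)
  then have "real (card (E' \<union> A)) \<le> real (3 * (n * p + n * f + \<gamma> n ((f + 1) * n div p)))"
    by linarith
  then show ?thesis using Sb unfolding n_def by simp
qed

theorem lemma1:
  "\<exists>C::real. \<forall>(V::'a set) E f p \<beta> S E' A (\<gamma>::nat \<Rightarrow> nat \<Rightarrow> nat).
     simple_graph V E \<and> f \<ge> 1 \<and> p \<ge> 1 \<and> alg1_run V E f p S E' \<and>
     (eft_sourcewise_spanner V E f \<beta> S A \<or> vft_sourcewise_spanner V E f \<beta> S A) \<and>
     (\<forall>l. card S \<le> l \<longrightarrow> card A \<le> \<gamma> (card V) l)
     \<longrightarrow> card S \<le> (f + 1) * card V div p \<and>
         real (card (E' \<union> A)) \<le> C * real (card V * p + card V * f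
                                        + \<gamma> (card V) ((f + 1) * card V div p))"
proof (intro exI allI impI)
  fix V :: "'a set" and E f p \<beta> S E' A and \<gamma> :: "nat \<Rightarrow> nat \<Rightarrow> nat"
  assume h: "simple_graph V E \<and> f \<ge> 1 \<and> p \<ge> 1 \<and> alg1_run V E f p S E' \<and>
     (eft_sourcewise_spanner V E f \<beta> S A \<or> vft_sourcewise_spanner V E f \<beta> S A) \<and>
     (\<forall>l. card S \<le> l \<longrightarrow> card A \<le> \<gamma> (card V) l)"
  then have "A \<subseteq> E" unfolding eft_sourcewise_spanner_def vft_sourcewise_spanner_def by blast
  then show "card S \<le> (f + 1) * card V div p \<and>
         real (card (E' \<union> A)) \<le> 3 * real (card V * p + card V * f
                                        + \<gamma> (card V) ((f + 1) * card V div p))"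
    using main_bound[of V E f p S E' A \<gamma>] h by blast
qed

end
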